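(* Let $G=(\mathcal V,\mathcal E)$ with $|\mathcal V|=n$, $\chi=\{0,\dots,d-1\}$, $C$, $2\le m\le n$ and $\mathbb L_m$ be as in the context, let $\mathcal V_m$ be the set of vertices of $\mathbb L_m$, $\mathcal V_m^*$ the set of vertices minimizing $\langle C,\cdot\rangle$ over $\mathbb L_m$, and $\Delta=\min_{V_1\in\mathcal V_m\setminus\mathcal V_m^*,\,V_2\in\mathcal V_m^*}(\langle C,V_1\rangle-\langle C,V_2\rangle)$. If $\mathbb L_m$ is tight, $|\mathcal V_m^*|=1$, and $\eta\ge\frac{\log(8mn^md^m)+2mn^md^m}{\Delta}$, then the assignment $x_i=\arg\max_{x'\in\chi}(\Gamma^*_\eta)_i(x')$, $i\in\mathcal V$, is a MAP assignment, i.e. it maximizes $\sum_{i}\theta_i(x_i)+\sum_{ij\in\mathcal E}\theta_{ij}(x_i,x_j)$ over $\chi^n$.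
   Context: A pairwise graphical model has vertex set $\mathcal V=\{1,\dots,n\}$, edge set $\mathcal E$ (each vertex lies on at least one edge), state set $\chi=\{0,\dots,d-1\}$, potentials $\theta_i:\chi\to\mathbb R$, $\theta_{ij}:\chi^2\to\mathbb R$, and cost $C=-\theta$. For $2\le m\le n$, the Sherali–Adams polytope $\mathbb L_m$ is the set of collections $\Gamma=(\Gamma_S)_{S\subseteq\mathcal V,1\le|S|\le m}$ of nonnegative functions $\Gamma_S:\chi^S\to[0,\infty)$ each summing to $1$, such that for $S\subset T$ the marginal of $\Gamma_T$ on $S$ is $\Gamma_S$; $\Gamma_i=\Gamma_{\{i\}}$, $\Gamma_{ij}=\Gamma_{\{i,j\}}$. $C$ is extended by $0$ on subsets that are neither singletons nor edges and $\langle C,\Gamma\rangle=\sum_i\sum_xC_i(x)\Gamma_i(x)+\sum_{ij\in\mathcal E}\sum_{x_i,x_j}C_{ij}(x_i,x_j)\Gamma_{ij}(x_i,x_j)$. $H(\Gamma)=\sum\Gamma(-\log\Gamma+1)$ summed over all entries, and $\Gamma^*_\eta=\arg\min_{\Gamma\in\mathbb L_m}\langle C,\Gamma\rangle-\frac1\eta H(\Gamma)$. $\mathbb L_m$ is tight if $\max_{\Gamma\in\mathbb L_m}\langle\theta,\Gamma\rangle$ has an integral optimal solution. *)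

theory Defs
  imports "HOL-Library.FuncSet" Complex_Main
begin

text \<open>Vertices are 1..n, states are 0..d-1. A pseudo-marginal collection Gamma is a
function from (vertex subset S, assignment y on S) to reals; assignments are
extensional functions in PiE S chi.  Entries outside the index set are 0,
so that the Sherali-Adams polytope is a set of points in a real vector space.\<close>

type_synonym gam = "nat set \<Rightarrow> (nat \<Rightarrow> nat) \<Rightarrow> real"

definition verts :: "nat \<Rightarrow> nat set" where
  "verts n = {1..n}"

definition states :: "nat \<Rightarrow> nat set" where
  "states d = {..<d}"

definition asg :: "nat \<Rightarrow> nat set \<Rightarrow> (nat \<Rightarrow> nat) set" where
  "asg d S = PiE S (\<lambda>_. states d)"

definition sa_index :: "nat \<Rightarrow> nat \<Rightarrow> nat set set" where
  "sa_index n m = {S. S \<subseteq> verts n \<and> 1 \<le> card S \<and> card S \<le> m}"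

definition SA_polytope :: "nat \<Rightarrow> nat \<Rightarrow> nat \<Rightarrow> gam set" where
  "SA_polytope n d m = {\<Gamma>.
     (\<forall>S y. \<Gamma> S y \<noteq> 0 \<longrightarrow> S \<in> sa_index n m \<and> y \<in> asg d S) \<and>
     (\<forall>S\<in>sa_index n m. (\<forall>y\<in>asg d S. 0 \<le> \<Gamma> S y) \<and> (\<Sum>y\<in>asg d S. \<Gamma> S y) = 1) \<and>
     (\<forall>S\<in>sa_index n m. \<forall>T\<in>sa_index n m. S \<subset> T \<longrightarrow>
        (\<forall>y\<in>asg d S. \<Gamma> S y = (\<Sum>z\<in>{z\<in>asg d T. restrict z S = y}. \<Gamma> T z)))}"

text \<open>Pairing of the potential theta = (th1, th2) with Gamma; th1 i x = theta_i(x),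
th2 i j x y = theta_ij(x,y). Edges are pairs (i,j) with i<j.\<close>

definition theta_pair ::
  "nat \<Rightarrow> nat \<Rightarrow> (nat \<times> nat) set \<Rightarrow> (nat \<Rightarrow> nat \<Rightarrow> real) \<Rightarrow> (nat \<Rightarrow> nat \<Rightarrow> nat \<Rightarrow> nat \<Rightarrow> real)
     \<Rightarrow> gam \<Rightarrow> real" where
  "theta_pair n d E th1 th2 \<Gamma> =
     (\<Sum>i\<in>verts n. \<Sum>x\<in>states d. th1 i x * \<Gamma> {i} (\<lambda>k\<in>{i}. x)) +
     (\<Sum>(i,j)\<in>E. \<Sum>y\<in>asg d {i,j}. th2 i j (y i) (y j) * \<Gamma> {i,j} y)"

definition cost_pair ::
  "nat \<Rightarrow> nat \<Rightarrow> (nat \<times> nat) set \<Rightarrow> (nat \<Rightarrow> nat \<Rightarrow> real) \<Rightarrow> (nat \<Rightarrow> nat \<Rightarrow> nat \<Rightarrow> nat \<Rightarrow> real)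
     \<Rightarrow> gam \<Rightarrow> real" where
  "cost_pair n d E th1 th2 \<Gamma> = - theta_pair n d E th1 th2 \<Gamma>"

text \<open>Entropy H(Gamma) = sum Gamma(-log Gamma + 1) (with ln 0 = 0, i.e. 0 log 0 = 0).\<close>
definition entropy :: "nat \<Rightarrow> nat \<Rightarrow> nat \<Rightarrow> gam \<Rightarrow> real" where
  "entropy n d m \<Gamma> =
     (\<Sum>S\<in>sa_index n m. \<Sum>y\<in>asg d S. \<Gamma> S y * (- ln (\<Gamma> S y) + 1))"

definition is_vertex :: "gam set \<Rightarrow> gam \<Rightarrow> bool" where
  "is_vertex P V \<longleftrightarrow> V \<in> P \<and>
     (\<forall>a\<in>P. \<forall>b\<in>P. \<forall>t::real. 0 < t \<and> t < 1 \<and>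
        (\<forall>S y. V S y = t * a S y + (1 - t) * b S y) \<longrightarrow> a = V \<and> b = V)"

definition integral_gam :: "gam \<Rightarrow> bool" where
  "integral_gam \<Gamma> \<longleftrightarrow> (\<forall>S y. \<Gamma> S y \<in> \<int>)"

definition SA_tight ::
  "nat \<Rightarrow> nat \<Rightarrow> nat \<Rightarrow> (nat \<times> nat) set \<Rightarrow> (nat \<Rightarrow> nat \<Rightarrow> real) \<Rightarrow> (nat \<Rightarrow> nat \<Rightarrow> nat \<Rightarrow> nat \<Rightarrow> real) \<Rightarrow> bool" where
  "SA_tight n d m E th1 th2 \<longleftrightarrow>
     (\<exists>\<Gamma>\<in>SA_polytope n d m. integral_gam \<Gamma> \<and>
        (\<forall>\<Gamma>'\<in>SA_polytope n d m. theta_pair n d E th1 th2 \<Gamma>' \<le> theta_pair n d E th1 th2 \<Gamma>))"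

definition score ::
  "nat \<Rightarrow> (nat \<times> nat) set \<Rightarrow> (nat \<Rightarrow> nat \<Rightarrow> real) \<Rightarrow> (nat \<Rightarrow> nat \<Rightarrow> nat \<Rightarrow> nat \<Rightarrow> real)
     \<Rightarrow> (nat \<Rightarrow> nat) \<Rightarrow> real" where
  "score n E th1 th2 x = (\<Sum>i\<in>verts n. th1 i (x i)) + (\<Sum>(i,j)\<in>E. th2 i j (x i) (x j))"

definition is_MAP ::
  "nat \<Rightarrow> nat \<Rightarrow> (nat \<times> nat) set \<Rightarrow> (nat \<Rightarrow> nat \<Rightarrow> real) \<Rightarrow> (nat \<Rightarrow> nat \<Rightarrow> nat \<Rightarrow> nat \<Rightarrow> real)
     \<Rightarrow> (nat \<Rightarrow> nat) \<Rightarrow> bool" where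
  "is_MAP n d E th1 th2 x \<longleftrightarrow> (\<forall>i\<in>verts n. x i \<in> states d) \<and>
     (\<forall>x'. (\<forall>i\<in>verts n. x' i \<in> states d) \<longrightarrow> score n E th1 th2 x' \<le> score n E th1 th2 x)"

end

theory Submission
  imports Defs
begin

definition L :: "gam \<Rightarrow> gam \<Rightarrow> gam \<Rightarrow> real \<Rightarrow> gam" where
  "L G a b s = (\<lambda>S y. G S y + s * (a S y - b S y))"

definition gsupp :: "gam \<Rightarrow> (nat set \<times> (nat \<Rightarrow> nat)) set" where
  "gsupp G = {(S,y). G S y \<noteq> 0}"

lemma fin_idx: "finite (sa_index n m)"
proof -
  have "sa_index n m \<subseteq> Pow (verts n)" by (auto simp: sa_index_def)
  then show ?thesis by (rule finite_subset) (simp add: verts_def)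
qed

lemma fin_idx_mem: "S \<in> sa_index n m \<Longrightarrow> finite S"
  unfolding sa_index_def verts_def by (blast intro: finite_subset[OF _ finite_atLeastAtMost])

lemma fin_asg: "finite S \<Longrightarrow> finite (asg d S)"
  by (simp add: asg_def states_def finite_PiE)

lemma card_asg: "finite S \<Longrightarrow> card (asg d S) = d ^ card S"
  by (simp add: asg_def states_def card_PiE)

lemma P_conds:
  assumes "G \<in> SA_polytope n d m"
  shows "(\<forall>S y. G S y \<noteq> 0 \<longrightarrow> S \<in> sa_index n m \<and> y \<in> asg d S) \<and>
     (\<forall>S\<in>sa_index n m. (\<forall>y\<in>asg d S. 0 \<le> G S y) \<and> (\<Sum>y\<in>asg d S. G S y) = 1) \<and>
     (\<forall>S\<in>sa_index n m. \<forall>T\<in>sa_index n m. S \<subset> T \<longrightarrow>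
        (\<forall>y\<in>asg d S. G S y = (\<Sum>z\<in>{z\<in>asg d T. restrict z S = y}. G T z)))"
  using assms unfolding SA_polytope_def mem_Collect_eq by assumption

lemma P_c1: "G \<in> SA_polytope n d m \<Longrightarrow> \<forall>S y. G S y \<noteq> 0 \<longrightarrow> S \<in> sa_index n m \<and> y \<in> asg d S"
  by (drule P_conds, erule conjunct1)

lemma P_c2: "G \<in> SA_polytope n d m \<Longrightarrow> \<forall>S\<in>sa_index n m. (\<forall>y\<in>asg d S. 0 \<le> G S y) \<and> (\<Sum>y\<in>asg d S. G S y) = 1"
  by (drule P_conds, drule conjunct2, erule conjunct1)

lemma P_c3: "G \<in> SA_polytope n d m \<Longrightarrow> \<forall>S\<in>sa_index n m. \<forall>T\<in>sa_index n m. S \<subset> T \<longrightarrow>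
        (\<forall>y\<in>asg d S. G S y = (\<Sum>z\<in>{z\<in>asg d T. restrict z S = y}. G T z))"
  by (drule P_conds, drule conjunct2, erule conjunct2)

lemma P_supp: "G \<in> SA_polytope n d m \<Longrightarrow> G S y \<noteq> 0 \<Longrightarrow> S \<in> sa_index n m \<and> y \<in> asg d S"
  using P_c1 by metis

lemma P_sum: "G \<in> SA_polytope n d m \<Longrightarrow> S \<in> sa_index n m \<Longrightarrow> (\<Sum>y\<in>asg d S. G S y) = 1"
  using P_c2 by metis

lemma P_marg: "G \<in> SA_polytope n d m \<Longrightarrow> S \<in> sa_index n m \<Longrightarrow> T \<in> sa_index n m \<Longrightarrow> S \<subset> T
   \<Longrightarrow> y \<in> asg d S \<Longrightarrow> G S y = (\<Sum>z\<in>{z\<in>asg d T. restrict z S = y}. G T z)"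
  by (rule bspec[OF mp[OF bspec[OF bspec[OF P_c3]]]])

lemma P_nonneg: assumes "G \<in> SA_polytope n d m" shows "0 \<le> G S y"
proof (cases "G S y = 0")
  case False
  then have "S \<in> sa_index n m" "y \<in> asg d S" using P_supp[OF assms] by auto
  then show ?thesis using P_c2[OF assms] by metis
qed simp

lemma P_le1: assumes "G \<in> SA_polytope n d m" shows "G S y \<le> 1"
proof (cases "G S y = 0")
  case False
  then have S: "S \<in> sa_index n m" "y \<in> asg d S" using P_supp[OF assms] by auto
  have "G S y \<le> (\<Sum>y\<in>asg d S. G S y)"
    by (rule member_le_sum[OF S(2) _ fin_asg[OF fin_idx_mem[OF S(1)]]]) (rule P_nonneg[OF assms])
  then show ?thesis using P_sum[OF assms S(1)] by simp
qed simp

lemma fin_gsupp: assumes "G \<in> SA_polytope n d m" shows "finite (gsupp G)"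
proof -
  have "gsupp G \<subseteq> Sigma (sa_index n m) (asg d)" using P_supp[OF assms] by (auto simp: gsupp_def)
  moreover have "finite (Sigma (sa_index n m) (asg d))"
    by (rule finite_SigmaI[OF fin_idx fin_asg[OF fin_idx_mem]])
  ultimately show ?thesis by (rule finite_subset)
qed

lemma L_mem:
  assumes G: "G \<in> SA_polytope n d m" and a: "a \<in> SA_polytope n d m" and b: "b \<in> SA_polytope n d m"
    and nn: "\<forall>S\<in>sa_index n m. \<forall>y\<in>asg d S. 0 \<le> L G a b s S y"
  shows "L G a b s \<in> SA_polytope n d m"
proof -
  have 1: "\<forall>S y. L G a b s S y \<noteq> 0 \<longrightarrow> S \<in> sa_index n m \<and> y \<in> asg d S"
  proof (intro allI impI)
    fix S y assume "L G a b s S y \<noteq> 0"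
    then have "G S y \<noteq> 0 \<or> a S y \<noteq> 0 \<or> b S y \<noteq> 0" by (auto simp: L_def)
    then show "S \<in> sa_index n m \<and> y \<in> asg d S" using P_supp G a b by blast
  qed
  have 2: "(\<Sum>y\<in>asg d S. L G a b s S y) = 1" if "S \<in> sa_index n m" for S
    using P_sum[OF G that] P_sum[OF a that] P_sum[OF b that]
    by (simp add: L_def sum.distrib sum_subtractf sum_distrib_left[symmetric])
  have 3: "L G a b s S y = (\<Sum>z\<in>{z\<in>asg d T. restrict z S = y}. L G a b s T z)"
    if "S \<in> sa_index n m" "T \<in> sa_index n m" "S \<subset> T" "y \<in> asg d S" for S T y
  proof -
    have m: "\<And>H. H \<in> SA_polytope n d m \<Longrightarrow> H S y = (\<Sum>z\<in>{z\<in>asg d T. restrict z S = y}. H T z)"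
      using that P_marg by blast
    let ?Z = "{z\<in>asg d T. restrict z S = y}"
    have "(\<Sum>z\<in>?Z. L G a b s T z) = (\<Sum>z\<in>?Z. G T z) + s * ((\<Sum>z\<in>?Z. a T z) - (\<Sum>z\<in>?Z. b T z))"
      unfolding L_def by (simp only: sum.distrib sum_subtractf sum_distrib_left[symmetric])
    then show ?thesis using m[OF G] m[OF a] m[OF b] by (simp add: L_def)
  qed
  show ?thesis unfolding SA_polytope_def mem_Collect_eq
  proof (intro conjI)
    show "\<forall>S\<in>sa_index n m. (\<forall>y\<in>asg d S. 0 \<le> L G a b s S y) \<and> (\<Sum>y\<in>asg d S. L G a b s S y) = 1"
      using nn 2 by simp
    show "\<forall>S\<in>sa_index n m. \<forall>T\<in>sa_index n m. S \<subset> T \<longrightarrow>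
        (\<forall>y\<in>asg d S. L G a b s S y = (\<Sum>z\<in>{z\<in>asg d T. restrict z S = y}. L G a b s T z))"
      using 3 by simp
  qed (rule 1)
qed

lemma sign_lemma:
  fixes g :: "'a \<Rightarrow> real"
  assumes "finite A" "sum g A = 0" "x \<in> A" "g x \<noteq> 0"
  shows "(\<exists>y\<in>A. g y < 0) \<and> (\<exists>y\<in>A. g y > 0)"
proof
  show "\<exists>y\<in>A. g y < 0"
  proof (rule ccontr)
    assume "\<not> ?thesis"
    then have "\<forall>y\<in>A. g y = 0" using sum_nonneg_eq_0_iff[OF assms(1), of g] assms(2) by force
    then show False using assms by auto
  qed
  show "\<exists>y\<in>A. g y > 0"
  proof (rule ccontr)
    assume "\<not> ?thesis"
    then have "\<forall>y\<in>A. - g y = 0" using sum_nonneg_eq_0_iff[OF assms(1), of "\<lambda>y. - g y"] assms(2)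
      by (force simp: sum_negf)
    then show False using assms by auto
  qed
qed

lemma ray:
  assumes G: "G \<in> SA_polytope n d m" and a: "a \<in> SA_polytope n d m" and b: "b \<in> SA_polytope n d m"
    and z: "\<forall>S y. G S y = 0 \<longrightarrow> a S y = b S y"
    and ex: "a Sx yx < b Sx yx"
  shows "\<exists>s>0. L G a b s \<in> SA_polytope n d m \<and> card (gsupp (L G a b s)) < card (gsupp G)"
proof -
  define N where "N = {e \<in> gsupp G. a (fst e) (snd e) < b (fst e) (snd e)}"
  define r where "r = (\<lambda>e. G (fst e) (snd e) / (b (fst e) (snd e) - a (fst e) (snd e)))"
  have finN: "finite N" using fin_gsupp[OF G] by (simp add: N_def)
  have e0: "(Sx, yx) \<in> N" using z ex by (auto simp: N_def gsupp_def)
  define s where "s = Min (r ` N)"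
  have "s \<in> r ` N" unfolding s_def using finN e0 by (intro Min_in) auto
  then obtain e1 where e1: "e1 \<in> N" "s = r e1" by auto
  have Gpos: "G S y > 0" if "(S,y) \<in> gsupp G" for S y
    using that P_nonneg[OF G, of S y] by (auto simp: gsupp_def)
  have spos: "s > 0" using e1 Gpos[of "fst e1" "snd e1"] by (auto simp: N_def r_def)
  have sle: "s \<le> r e" if "e \<in> N" for e unfolding s_def using finN that by simp
  have nn: "0 \<le> L G a b s S y" for S y
  proof (cases "a S y < b S y")
    case True
    then have "G S y \<noteq> 0" using z by auto
    then have "(S,y) \<in> N" using True by (auto simp: N_def gsupp_def)
    then have "s \<le> G S y / (b S y - a S y)" using sle r_def by fastforce
    then have "s * (b S y - a S y) \<le> G S y" using True by (simp add: pos_le_divide_eq)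
    then show ?thesis by (simp add: L_def algebra_simps)
  next
    case False
    then show ?thesis using spos P_nonneg[OF G, of S y] by (simp add: L_def)
  qed
  have mem: "L G a b s \<in> SA_polytope n d m" using L_mem[OF G a b] nn by blast
  have sub: "gsupp (L G a b s) \<subseteq> gsupp G" using z by (auto simp: gsupp_def L_def)
  have e1G: "e1 \<in> gsupp G" using e1 by (simp add: N_def)
  have "L G a b s (fst e1) (snd e1) = 0"
    using e1 by (simp add: N_def r_def L_def field_simps)
  then have "e1 \<notin> gsupp (L G a b s)" by (auto simp: gsupp_def)
  then have "gsupp (L G a b s) \<subset> gsupp G" using sub e1G by blast
  then have "card (gsupp (L G a b s)) < card (gsupp G)" by (rule psubset_card_mono[OF fin_gsupp[OF G]])
  then show ?thesis using mem spos by blast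
qed

lemma split:
  assumes G: "G \<in> SA_polytope n d m" and a: "a \<in> SA_polytope n d m" and b: "b \<in> SA_polytope n d m"
    and z: "\<forall>S y. G S y = 0 \<longrightarrow> a S y = b S y"
    and ne: "a \<noteq> b"
  shows "\<exists>s1 s2. s1 > 0 \<and> s2 > 0 \<and> L G a b s1 \<in> SA_polytope n d m \<and> L G b a s2 \<in> SA_polytope n d m
     \<and> card (gsupp (L G a b s1)) < card (gsupp G) \<and> card (gsupp (L G b a s2)) < card (gsupp G)"
proof -
  obtain S y where ab: "a S y \<noteq> b S y" using ne by (meson ext)
  then have "a S y \<noteq> 0 \<or> b S y \<noteq> 0" by auto
  then have S: "S \<in> sa_index n m" "y \<in> asg d S" using P_supp a b by blast+
  have "(\<Sum>y\<in>asg d S. a S y - b S y) = 0"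
    using P_sum[OF a S(1)] P_sum[OF b S(1)] by (simp add: sum_subtractf)
  from sign_lemma[OF fin_asg[OF fin_idx_mem[OF S(1)]] this S(2)] ab
  obtain y1 y2 where "a S y1 - b S y1 < 0" "a S y2 - b S y2 > 0" by auto
  then have ab1: "a S y1 < b S y1" and ab2: "b S y2 < a S y2" by auto
  have z': "\<forall>S y. G S y = 0 \<longrightarrow> b S y = a S y" using z by simp
  from ray[where Sx=S and yx=y1, OF G a b z ab1] obtain s1 where
    s1: "s1 > 0 \<and> L G a b s1 \<in> SA_polytope n d m \<and> card (gsupp (L G a b s1)) < card (gsupp G)"
    by (rule exE)
  from ray[where Sx=S and yx=y2, OF G b a z' ab2] obtain s2 where
    s2: "s2 > 0 \<and> L G b a s2 \<in> SA_polytope n d m \<and> card (gsupp (L G b a s2)) < card (gsupp G)"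
    by (rule exE)
  show ?thesis by (rule exI[of _ s1], rule exI[of _ s2]) (use s1 s2 in simp)
qed

lemma vertex_D:
  assumes "is_vertex P V" "a \<in> P" "b \<in> P" "0 < t" "t < 1" "\<forall>S y. V S y = t * a S y + (1 - t) * b S y"
  shows "a = V \<and> b = V"
proof -
  have "\<forall>a\<in>P. \<forall>b\<in>P. \<forall>t::real. 0 < t \<and> t < 1 \<and>
        (\<forall>S y. V S y = t * a S y + (1 - t) * b S y) \<longrightarrow> a = V \<and> b = V"
    using assms(1) unfolding is_vertex_def by (rule conjunct2)
  then show ?thesis using assms(2-6) by blast
qed

lemma not_vertex_E:
  assumes "\<not> is_vertex P V" "V \<in> P"
  obtains a b t where "a \<in> P" "b \<in> P" "0 < t" "t < 1" "\<forall>S y. V S y = t * a S y + (1 - t) * b S y"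
    "\<not> (a = V \<and> b = V)"
  using assms unfolding is_vertex_def by blast

lemma affine_nonneg:
  fixes f :: "gam \<Rightarrow> real"
  assumes aff: "\<And>G a b s. f (L G a b s) = f G + s * (f a - f b)"
    and vert: "\<And>V. is_vertex (SA_polytope n d m) V \<Longrightarrow> 0 \<le> f V"
    and G: "G \<in> SA_polytope n d m"
  shows "0 \<le> f G"
  using G
proof (induction "card (gsupp G)" arbitrary: G rule: less_induct)
  case (less G)
  show ?case
  proof (cases "is_vertex (SA_polytope n d m) G")
    case True
    then show ?thesis by (rule vert)
  next
    case False
    from not_vertex_E[OF False less.prems] obtain a b t where
      ab: "a \<in> SA_polytope n d m" "b \<in> SA_polytope n d m" "0 < t" "t < 1"
        "\<forall>S y. G S y = t * a S y + (1 - t) * b S y" "\<not> (a = G \<and> b = G)" .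
    have ne: "a \<noteq> b"
    proof
      assume eq: "a = b"
      have "G = a"
      proof (rule ext, rule ext)
        fix S y show "G S y = a S y" using ab(5) eq by (simp add: algebra_simps)
      qed
      with ab(6) eq show False by simp
    qed
    have z: "\<forall>S y. G S y = 0 \<longrightarrow> a S y = b S y"
    proof (intro allI impI)
      fix S y assume G0: "G S y = 0"
      have "0 \<le> a S y" "0 \<le> b S y" using P_nonneg ab(1,2) by auto
      then have h: "t * a S y \<ge> 0" "(1-t) * b S y \<ge> 0" using ab(3,4) by auto
      have "t * a S y + (1 - t) * b S y = 0" using ab(5) G0 by metis
      then have "t * a S y = 0" "(1-t) * b S y = 0" using h by linarith+
      then show "a S y = b S y" using ab(3,4) by simp
    qed
    from split[OF less.prems ab(1,2) z ne] obtain s1 s2 where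
      s: "s1 > 0 \<and> s2 > 0 \<and> L G a b s1 \<in> SA_polytope n d m \<and> L G b a s2 \<in> SA_polytope n d m
     \<and> card (gsupp (L G a b s1)) < card (gsupp G) \<and> card (gsupp (L G b a s2)) < card (gsupp G)"
      by (elim exE)
    have f1: "0 \<le> f (L G a b s1)" using less.hyps s by blast
    have f2: "0 \<le> f (L G b a s2)" using less.hyps s by blast
    have "(s1 + s2) * f G = s2 * f (L G a b s1) + s1 * f (L G b a s2)"
      by (simp add: aff algebra_simps)
    also have "\<dots> \<ge> 0" using f1 f2 s by simp
    finally have "0 \<le> (s1 + s2) * f G" .
    then show ?thesis using s by (simp add: zero_le_mult_iff)
  qed
qed

lemma vert_inj:
  assumes V: "is_vertex (SA_polytope n d m) V" and W: "is_vertex (SA_polytope n d m) W"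
    and eq: "gsupp V = gsupp W"
  shows "V = W"
proof (rule ccontr)
  assume ne: "V \<noteq> W"
  have VP: "V \<in> SA_polytope n d m" using V by (simp add: is_vertex_def)
  have WP: "W \<in> SA_polytope n d m" using W by (simp add: is_vertex_def)
  have z: "\<forall>S y. V S y = 0 \<longrightarrow> V S y = W S y"
  proof (intro allI impI)
    fix S y assume "V S y = 0"
    then have "(S,y) \<notin> gsupp V" by (simp add: gsupp_def)
    then have "(S,y) \<notin> gsupp W" using eq by simp
    then show "V S y = W S y" using \<open>V S y = 0\<close> by (simp add: gsupp_def)
  qed
  from split[OF VP VP WP z ne] obtain s1 s2 where
    s: "s1 > 0 \<and> s2 > 0 \<and> L V V W s1 \<in> SA_polytope n d m \<and> L V W V s2 \<in> SA_polytope n d m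
     \<and> card (gsupp (L V V W s1)) < card (gsupp V) \<and> card (gsupp (L V W V s2)) < card (gsupp V)"
    by (elim exE)
  define t where "t = s2 / (s1 + s2)"
  have t: "0 < t" "t < 1" using s by (auto simp: t_def field_simps)
  have comb: "\<forall>S y. V S y = t * L V V W s1 S y + (1 - t) * L V W V s2 S y"
  proof (intro allI)
    fix S y
    have "s1 + s2 > 0" using s by simp
    then have z0: "t * s1 - (1 - t) * s2 = 0" unfolding t_def by (simp add: field_simps)
    have "t * L V V W s1 S y + (1 - t) * L V W V s2 S y = V S y + (t * s1 - (1 - t) * s2) * (V S y - W S y)"
      unfolding L_def by (simp add: algebra_simps)
    then show "V S y = t * L V V W s1 S y + (1 - t) * L V W V s2 S y" using z0 by simp
  qed
  have "L V V W s1 = V" using vertex_D[OF V _ _ t comb] s by blast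
  then show False using s by simp
qed

lemma fin_vert: "finite {V. is_vertex (SA_polytope n d m) V}"
proof (rule inj_on_finite[where f = gsupp])
  show "inj_on gsupp {V. is_vertex (SA_polytope n d m) V}"
    by (rule inj_onI) (use vert_inj in blast)
  show "gsupp ` {V. is_vertex (SA_polytope n d m) V} \<subseteq> Pow (Sigma (sa_index n m) (asg d))"
  proof
    fix X assume "X \<in> gsupp ` {V. is_vertex (SA_polytope n d m) V}"
    then obtain V where V: "is_vertex (SA_polytope n d m) V" "X = gsupp V" by blast
    have VP: "V \<in> SA_polytope n d m" using V by (simp add: is_vertex_def)
    show "X \<in> Pow (Sigma (sa_index n m) (asg d))"
      using V(2) P_supp[OF VP] by (auto simp: gsupp_def)
  qed
  show "finite (Pow (Sigma (sa_index n m) (asg d)))"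
    by (simp add: finite_SigmaI[OF fin_idx fin_asg[OF fin_idx_mem]])
qed

definition emb :: "nat \<Rightarrow> nat \<Rightarrow> (nat \<Rightarrow> nat) \<Rightarrow> gam" where
  "emb n m z = (\<lambda>S y. if S \<in> sa_index n m \<and> y = restrict z S then 1 else 0)"

lemma restrict_asg:
  assumes "\<forall>i\<in>verts n. z i \<in> states d" "S \<in> sa_index n m"
  shows "restrict z S \<in> asg d S"
  using assms unfolding asg_def sa_index_def by (auto simp: restrict_PiE_iff)

lemma emb_mem:
  assumes zs: "\<forall>i\<in>verts n. z i \<in> states d"
  shows "emb n m z \<in> SA_polytope n d m"
  unfolding SA_polytope_def mem_Collect_eq
proof (intro conjI)
  show "\<forall>S y. emb n m z S y \<noteq> 0 \<longrightarrow> S \<in> sa_index n m \<and> y \<in> asg d S"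
    using restrict_asg[OF zs] by (auto simp: emb_def)
  show "\<forall>S\<in>sa_index n m. (\<forall>y\<in>asg d S. 0 \<le> emb n m z S y) \<and> (\<Sum>y\<in>asg d S. emb n m z S y) = 1"
  proof
    fix S assume S: "S \<in> sa_index n m"
    have "(\<Sum>y\<in>asg d S. emb n m z S y) = (\<Sum>y\<in>asg d S. if y = restrict z S then 1 else 0)"
      using S by (simp add: emb_def)
    also have "\<dots> = 1" using restrict_asg[OF zs S] fin_asg[OF fin_idx_mem[OF S]] by simp
    finally show "(\<forall>y\<in>asg d S. 0 \<le> emb n m z S y) \<and> (\<Sum>y\<in>asg d S. emb n m z S y) = 1"
      by (simp add: emb_def)
  qed
  show "\<forall>S\<in>sa_index n m. \<forall>T\<in>sa_index n m. S \<subset> T \<longrightarrow>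
        (\<forall>y\<in>asg d S. emb n m z S y = (\<Sum>w\<in>{w\<in>asg d T. restrict w S = y}. emb n m z T w))"
  proof (intro ballI impI)
    fix S T y assume S: "S \<in> sa_index n m" and T: "T \<in> sa_index n m" and ST: "S \<subset> T" and y: "y \<in> asg d S"
    let ?Z = "{w\<in>asg d T. restrict w S = y}"
    have fZ: "finite ?Z" using fin_asg[OF fin_idx_mem[OF T]] by simp
    have "(\<Sum>w\<in>?Z. emb n m z T w) = (\<Sum>w\<in>?Z. if w = restrict z T then 1 else 0)"
      using T by (simp add: emb_def)
    also have "\<dots> = (if restrict z T \<in> ?Z then 1 else 0)" using fZ by simp
    also have "\<dots> = (if restrict z S = y then 1 else 0)"
    proof -
      have "restrict (restrict z T) S = restrict z S" proof -
        have "T \<inter> S = S" using ST by blast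
        then show ?thesis by simp
      qed
      then show ?thesis using restrict_asg[OF zs T] by simp
    qed
    also have "\<dots> = emb n m z S y" using S by (auto simp: emb_def)
    finally show "emb n m z S y = (\<Sum>w\<in>?Z. emb n m z T w)" by simp
  qed
qed

lemma single_restrict: "((\<lambda>k\<in>{i}. x) = restrict z {i}) \<longleftrightarrow> x = z i"
proof
  assume "(\<lambda>k\<in>{i}. x) = restrict z {i}"
  then have "(\<lambda>k\<in>{i}. x) i = restrict z {i} i" by simp
  then show "x = z i" by simp
qed (auto simp: restrict_def)

lemma single_idx: "i \<in> verts n \<Longrightarrow> 1 \<le> m \<Longrightarrow> {i} \<in> sa_index n m"
  by (simp add: sa_index_def)

lemma pair_idx: "i \<in> verts n \<Longrightarrow> j \<in> verts n \<Longrightarrow> i < j \<Longrightarrow> 2 \<le> m \<Longrightarrow> {i,j} \<in> sa_index n m"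
  by (simp add: sa_index_def)

lemma theta_emb:
  assumes zs: "\<forall>i\<in>verts n. z i \<in> states d"
    and edges: "E \<subseteq> {(i,j). i \<in> verts n \<and> j \<in> verts n \<and> i < j}" and m2: "2 \<le> m"
  shows "theta_pair n d E th1 th2 (emb n m z) = score n E th1 th2 z"
proof -
  have s1: "(\<Sum>x\<in>states d. th1 i x * emb n m z {i} (\<lambda>k\<in>{i}. x)) = th1 i (z i)" if i: "i \<in> verts n" for i
  proof -
    have "(\<Sum>x\<in>states d. th1 i x * emb n m z {i} (\<lambda>k\<in>{i}. x)) = (\<Sum>x\<in>states d. if x = z i then th1 i x else 0)"
      using single_idx[OF i] m2 by (intro sum.cong) (auto simp: emb_def single_restrict)
    also have "\<dots> = th1 i (z i)" using zs i by (simp add: states_def)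
    finally show ?thesis .
  qed
  have s2: "(\<Sum>y\<in>asg d {i,j}. th2 i j (y i) (y j) * emb n m z {i,j} y) = th2 i j (z i) (z j)"
    if ij: "(i,j) \<in> E" for i j
  proof -
    have ij': "i \<in> verts n" "j \<in> verts n" "i < j" using ij edges by auto
    have I: "{i,j} \<in> sa_index n m" using pair_idx[OF ij' m2] .
    have "(\<Sum>y\<in>asg d {i,j}. th2 i j (y i) (y j) * emb n m z {i,j} y)
        = (\<Sum>y\<in>asg d {i,j}. if y = restrict z {i,j} then th2 i j (y i) (y j) else 0)"
      using I by (intro sum.cong) (auto simp: emb_def)
    also have "\<dots> = th2 i j (restrict z {i,j} i) (restrict z {i,j} j)"
      using restrict_asg[OF zs I] fin_asg[OF fin_idx_mem[OF I]] by simp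
    also have "\<dots> = th2 i j (z i) (z j)" by simp
    finally show ?thesis .
  qed
  show ?thesis unfolding theta_pair_def score_def
    using s1 s2 by (simp add: case_prod_beta)
qed

lemma int01:
  assumes G: "G \<in> SA_polytope n d m" and I: "integral_gam G"
  shows "G S y = 0 \<or> G S y = 1"
proof -
  have "G S y \<in> \<int>" using I by (simp add: integral_gam_def)
  then obtain k :: int where k: "G S y = of_int k" by (elim Ints_cases)
  have "0 \<le> k" "k \<le> 1" using P_nonneg[OF G, of S y] P_le1[OF G, of S y] k by auto
  then have "k = 0 \<or> k = 1" by auto
  then show ?thesis using k by auto
qed

lemma integral_vertex:
  assumes G: "G \<in> SA_polytope n d m" and I: "integral_gam G"
  shows "is_vertex (SA_polytope n d m) G"
  unfolding is_vertex_def
proof (intro conjI ballI allI impI)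
  show "G \<in> SA_polytope n d m" by (rule G)
  fix a b t assume a: "a \<in> SA_polytope n d m" and b: "b \<in> SA_polytope n d m"
    and h: "0 < t \<and> t < 1 \<and> (\<forall>S y. G S y = t * a S y + (1 - t) * b S y)"
  have pt: "a S y = G S y \<and> b S y = G S y" for S y
  proof -
    have c: "G S y = t * a S y + (1 - t) * b S y" using h by blast
    have t: "0 < t" "t < 1" using h by auto
    have r: "0 \<le> a S y" "a S y \<le> 1" "0 \<le> b S y" "b S y \<le> 1"
      using P_nonneg[OF a] P_le1[OF a] P_nonneg[OF b] P_le1[OF b] by auto
    have p1: "t * a S y \<ge> 0" "(1-t) * b S y \<ge> 0" "t * (1 - a S y) \<ge> 0" "(1-t) * (1 - b S y) \<ge> 0"
      using r t by auto
    show ?thesis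
    proof (cases "G S y = 0")
      case True
      then have "t * a S y = 0" "(1-t) * b S y = 0" using c p1 by linarith+
      then show ?thesis using t True by simp
    next
      case False
      then have G1: "G S y = 1" using int01[OF G I] by blast
      have e: "t * (1 - a S y) + (1-t) * (1 - b S y) = 0" using c G1 by (simp add: algebra_simps)
      then have "t * (1 - a S y) = 0" "(1-t) * (1 - b S y) = 0" using p1 by linarith+
      then show ?thesis using t G1 by simp
    qed
  qed
  show "a = G" using pt by (auto intro!: ext)
  show "b = G" using pt by (auto intro!: ext)
qed

lemma pm:
  fixes g :: "'a \<Rightarrow> real"
  assumes fin: "finite A" and v: "\<forall>y\<in>A. g y = 0 \<or> g y = 1" and s: "sum g A = 1"
  shows "\<exists>y\<in>A. g y = 1 \<and> (\<forall>y'\<in>A. g y' = 1 \<longrightarrow> y' = y)"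
proof -
  obtain y where y: "y \<in> A" "g y \<noteq> 0"
  proof (rule ccontr)
    assume "\<not> thesis"
    then have "\<forall>y\<in>A. g y = 0" using that by blast
    then have "sum g A = 0" by simp
    then show False using s by simp
  qed
  then have y1: "g y = 1" using v by blast
  have "\<forall>y'\<in>A. g y' = 1 \<longrightarrow> y' = y"
  proof (intro ballI impI, rule ccontr)
    fix y' assume y': "y' \<in> A" "g y' = 1" "y' \<noteq> y"
    have "sum g {y, y'} \<le> sum g A"
      by (rule sum_mono2[OF fin]) (use y y' v in auto)
    then show False using y1 y' s by simp
  qed
  then show ?thesis using y y1 by blast
qed

lemma integral_emb:
  assumes G: "G \<in> SA_polytope n d m" and I: "integral_gam G" and m1: "1 \<le> m"
  shows "\<exists>z. (\<forall>i\<in>verts n. z i \<in> states d) \<and> G = emb n m z"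
proof -
  define ys where "ys S = (SOME y. y \<in> asg d S \<and> G S y = 1)" for S
  have pmS: "\<exists>y\<in>asg d S. G S y = 1 \<and> (\<forall>y'\<in>asg d S. G S y' = 1 \<longrightarrow> y' = y)" if S: "S \<in> sa_index n m" for S
    using pm[OF fin_asg[OF fin_idx_mem[OF S]] _ P_sum[OF G S]] int01[OF G I] by blast
  have ysS: "ys S \<in> asg d S \<and> G S (ys S) = 1" if S: "S \<in> sa_index n m" for S
  proof -
    have "\<exists>y. y \<in> asg d S \<and> G S y = 1" using pmS[OF S] by blast
    then show ?thesis unfolding ys_def by (rule someI_ex)
  qed
  have ysU: "y = ys S" if S: "S \<in> sa_index n m" and y: "y \<in> asg d S" "G S y = 1" for S y
    using pmS[OF S] ysS[OF S] y by metis
  define z where "z i = ys {i} i" for i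
  have zs: "\<forall>i\<in>verts n. z i \<in> states d"
  proof
    fix i assume i: "i \<in> verts n"
    have "ys {i} \<in> asg d {i}" using ysS[OF single_idx[OF i m1]] by blast
    then show "z i \<in> states d" unfolding z_def asg_def by (auto simp: PiE_iff)
  qed
  have b: "ys S i = z i" if S: "S \<in> sa_index n m" and iS: "i \<in> S" for S i
  proof (cases "S = {i}")
    case True
    then show ?thesis by (simp add: z_def)
  next
    case False
    have iv: "i \<in> verts n" using S iS by (auto simp: sa_index_def)
    have Si: "{i} \<in> sa_index n m" by (rule single_idx[OF iv m1])
    have sub: "{i} \<subset> S" using False iS by blast
    define w where "w = (\<lambda>k\<in>{i}. ys S i)"
    have ysSS: "ys S \<in> asg d S" "G S (ys S) = 1" using ysS[OF S] by auto
    have w: "w \<in> asg d {i}"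
      using ysSS(1) iS unfolding w_def asg_def by (auto simp: PiE_iff)
    let ?Z = "{z' \<in> asg d S. restrict z' {i} = w}"
    have mem: "ys S \<in> ?Z" using ysSS(1) by (auto simp: w_def restrict_def)
    have "G {i} w = (\<Sum>z'\<in>?Z. G S z')" by (rule P_marg[OF G Si S sub w])
    also have "\<dots> \<ge> G S (ys S)"
      by (rule member_le_sum[OF mem]) (use P_nonneg[OF G] fin_asg[OF fin_idx_mem[OF S]] in auto)
    finally have "G {i} w \<ge> 1" using ysSS(2) by simp
    then have "G {i} w = 1" using P_le1[OF G, of "{i}" w] by simp
    then have "w = ys {i}" using ysU[OF Si w] by simp
    then have "w i = ys {i} i" by simp
    then show ?thesis by (simp add: w_def z_def)
  qed
  have c: "ys S = restrict z S" if S: "S \<in> sa_index n m" for S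
  proof
    fix k show "ys S k = restrict z S k"
    proof (cases "k \<in> S")
      case True then show ?thesis using b[OF S True] by simp
    next
      case False
      have "ys S \<in> asg d S" using ysS[OF S] by blast
      then have "ys S k = undefined" using False unfolding asg_def by (rule PiE_arb)
      then show ?thesis using False by simp
    qed
  qed
  have "G = emb n m z"
  proof (intro ext)
    fix S y
    show "G S y = emb n m z S y"
    proof (cases "S \<in> sa_index n m \<and> y \<in> asg d S")
      case False
      then have "G S y = 0" using P_supp[OF G] by blast
      moreover have "\<not> (S \<in> sa_index n m \<and> y = restrict z S)"
        using False restrict_asg[OF zs] by blast
      ultimately show ?thesis by (simp add: emb_def)
    next
      case True
      then have S: "S \<in> sa_index n m" and y: "y \<in> asg d S" by auto
      show ?thesis
      proof (cases "y = restrict z S")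
        case True
        then show ?thesis using ysS[OF S] c[OF S] S by (simp add: emb_def)
      next
        case False
        then have "G S y \<noteq> 1" using ysU[OF S y] c[OF S] by auto
        then have "G S y = 0" using int01[OF G I] by blast
        then show ?thesis using False by (simp add: emb_def)
      qed
    qed
  qed
  then show ?thesis using zs by blast
qed

lemma theta_L: "theta_pair n d E th1 th2 (L G a b s) =
   theta_pair n d E th1 th2 G + s * (theta_pair n d E th1 th2 a - theta_pair n d E th1 th2 b)"
  unfolding theta_pair_def L_def
  by (simp add: algebra_simps sum.distrib sum_subtractf sum_distrib_left case_prod_beta)

lemma cost_L: "cost_pair n d E th1 th2 (L G a b s) =
   cost_pair n d E th1 th2 G + s * (cost_pair n d E th1 th2 a - cost_pair n d E th1 th2 b)"
  unfolding cost_pair_def theta_L by (simp add: algebra_simps)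

lemma card_idx: assumes "m \<le> n" shows "card (sa_index n m) \<le> m * n ^ m"
proof -
  have eq: "sa_index n m = (\<Union>k\<in>{1..m}. {S. S \<subseteq> verts n \<and> card S = k})"
    by (auto simp: sa_index_def)
  have "card (sa_index n m) \<le> (\<Sum>k\<in>{1..m}. card {S. S \<subseteq> verts n \<and> card S = k})"
    unfolding eq by (rule card_UN_le) simp
  also have "\<dots> = (\<Sum>k\<in>{1..m}. n choose k)"
    by (simp add: n_subsets verts_def)
  also have "\<dots> \<le> (\<Sum>k\<in>{1..m}. n ^ m)"
  proof (rule sum_mono)
    fix k assume k: "k \<in> {1..m}"
    then have "n choose k \<le> n ^ k" using assms by (intro binomial_le_pow) auto
    also have "\<dots> \<le> n ^ m" using k assms by (intro power_increasing) auto
    finally show "n choose k \<le> n ^ m" .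
  qed
  also have "\<dots> = m * n ^ m" by simp
  finally show ?thesis .
qed

lemma term_le1:
  fixes g :: real assumes "0 \<le> g" shows "g * (- ln g + 1) \<le> 1"
proof (cases "g = 0")
  case False
  then have g: "0 < g" using assms by simp
  have "ln (1/g) \<le> 1/g - 1" using g by (intro ln_le_minus_one) simp
  then have "- ln g \<le> 1/g - 1" using g by (simp add: ln_div)
  then have "g * (- ln g) \<le> g * (1/g - 1)" using g by (intro mult_left_mono) auto
  then show ?thesis using g by (simp add: algebra_simps)
qed simp

lemma term_nonneg:
  fixes g :: real assumes "0 \<le> g" "g \<le> 1" shows "0 \<le> g * (- ln g + 1)"
proof (cases "g = 0")
  case False
  then have g: "0 < g" using assms by simp
  have "ln g \<le> 0" using g assms by simp
  then have "0 \<le> - ln g + 1" by simp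
  then show ?thesis using g by (intro mult_nonneg_nonneg) auto
qed simp

lemma entropy_nonneg: assumes G: "G \<in> SA_polytope n d m" shows "0 \<le> entropy n d m G"
  unfolding entropy_def
proof (rule sum_nonneg, rule sum_nonneg)
  fix S y show "0 \<le> G S y * (- ln (G S y) + 1)" by (rule term_nonneg[OF P_nonneg[OF G] P_le1[OF G]])
qed

lemma entropy_le:
  assumes G: "G \<in> SA_polytope n d m" and d1: "1 \<le> d" and mn: "m \<le> n"
  shows "entropy n d m G \<le> real m * real n ^ m * real d ^ m"
proof -
  have "entropy n d m G \<le> (\<Sum>S\<in>sa_index n m. \<Sum>y\<in>asg d S. (1::real))"
    unfolding entropy_def by (intro sum_mono term_le1 P_nonneg[OF G])
  also have "\<dots> = (\<Sum>S\<in>sa_index n m. real (d ^ card S))"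
    by (intro sum.cong refl) (simp add: card_asg fin_idx_mem)
  also have "\<dots> \<le> (\<Sum>S\<in>sa_index n m. real (d ^ m))"
  proof (intro sum_mono)
    fix S assume "S \<in> sa_index n m"
    then have "card S \<le> m" by (simp add: sa_index_def)
    then show "real (d ^ card S) \<le> real (d ^ m)" using d1 by (simp add: power_increasing)
  qed
  also have "\<dots> = real (card (sa_index n m)) * real d ^ m" by simp
  also have "\<dots> \<le> real (m * n ^ m) * real d ^ m"
  proof (rule mult_right_mono)
    show "real (card (sa_index n m)) \<le> real (m * n ^ m)" using card_idx[OF mn] by (simp only: of_nat_le_iff)
  qed simp
  also have "\<dots> = real m * real n ^ m * real d ^ m" by simp
  finally show ?thesis .
qed

theorem corollary1:
  fixes n d m :: nat and E :: "(nat \<times> nat) set"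
    and th1 :: "nat \<Rightarrow> nat \<Rightarrow> real" and th2 :: "nat \<Rightarrow> nat \<Rightarrow> nat \<Rightarrow> nat \<Rightarrow> real"
    and \<eta> :: real and \<Gamma>s :: gam and x :: "nat \<Rightarrow> nat"
  assumes edges: "E \<subseteq> {(i,j). i \<in> verts n \<and> j \<in> verts n \<and> i < j}"
    and covered: "\<forall>i\<in>verts n. \<exists>j. (i,j) \<in> E \<or> (j,i) \<in> E"
    and m2: "2 \<le> m" and mn: "m \<le> n"
    and tight: "SA_tight n d m E th1 th2"
    and unique: "card {V. is_vertex (SA_polytope n d m) V \<and>
        (\<forall>\<Gamma>\<in>SA_polytope n d m. cost_pair n d E th1 th2 V \<le> cost_pair n d E th1 th2 \<Gamma>)} = 1"
    and eta: "\<eta> \<ge> (ln (8 * m * n ^ m * d ^ m) + 2 * m * n ^ m * d ^ m) /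
        Min {cost_pair n d E th1 th2 V1 - cost_pair n d E th1 th2 V2 | V1 V2.
               is_vertex (SA_polytope n d m) V1 \<and>
               \<not> (\<forall>\<Gamma>\<in>SA_polytope n d m. cost_pair n d E th1 th2 V1 \<le> cost_pair n d E th1 th2 \<Gamma>) \<and>
               is_vertex (SA_polytope n d m) V2 \<and>
               (\<forall>\<Gamma>\<in>SA_polytope n d m. cost_pair n d E th1 th2 V2 \<le> cost_pair n d E th1 th2 \<Gamma>)}"
    and Gs_mem: "\<Gamma>s \<in> SA_polytope n d m"
    and Gs_min: "\<forall>\<Gamma>\<in>SA_polytope n d m.
        cost_pair n d E th1 th2 \<Gamma>s - (1 / \<eta>) * entropy n d m \<Gamma>s
          \<le> cost_pair n d E th1 th2 \<Gamma> - (1 / \<eta>) * entropy n d m \<Gamma>"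
    and x_argmax: "\<forall>i\<in>verts n. x i \<in> states d \<and>
        (\<forall>x'\<in>states d. \<Gamma>s {i} (\<lambda>k\<in>{i}. x') \<le> \<Gamma>s {i} (\<lambda>k\<in>{i}. x i))"
  shows "is_MAP n d E th1 th2 x"
proof -
  let ?P = "SA_polytope n d m"
  let ?c = "cost_pair n d E th1 th2"
  let ?th = "theta_pair n d E th1 th2"
  have m1: "1 \<le> m" using m2 by simp
  obtain G0 where G0: "G0 \<in> ?P" "integral_gam G0" "\<forall>G'\<in>?P. ?th G' \<le> ?th G0"
    using tight unfolding SA_tight_def by blast
  have G0opt: "\<forall>G\<in>?P. ?c G0 \<le> ?c G" using G0(3) by (simp add: cost_pair_def)
  have G0v: "is_vertex ?P G0" by (rule integral_vertex[OF G0(1,2)])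
  obtain x0 where x0: "\<forall>i\<in>verts n. x0 i \<in> states d" "G0 = emb n m x0"
    using integral_emb[OF G0(1,2) m1] by blast
  define Opt where "Opt = {V. is_vertex ?P V \<and> (\<forall>\<Gamma>\<in>?P. ?c V \<le> ?c \<Gamma>)}"
  have G0Opt: "G0 \<in> Opt" using G0v G0opt by (simp add: Opt_def)
  have "card Opt = 1" using unique by (simp add: Opt_def)
  then obtain v where "Opt = {v}" by (rule card_1_singletonE)
  then have OptG0: "Opt = {G0}" using G0Opt by simp
  have optv: "V = G0" if "is_vertex ?P V" "\<forall>\<Gamma>\<in>?P. ?c V \<le> ?c \<Gamma>" for V
  proof -
    have "V \<in> Opt" using that by (simp add: Opt_def)
    then show ?thesis using OptG0 by simp
  qed
  define D where "D = {cost_pair n d E th1 th2 V1 - cost_pair n d E th1 th2 V2 | V1 V2.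
               is_vertex (SA_polytope n d m) V1 \<and>
               \<not> (\<forall>\<Gamma>\<in>SA_polytope n d m. cost_pair n d E th1 th2 V1 \<le> cost_pair n d E th1 th2 \<Gamma>) \<and>
               is_vertex (SA_polytope n d m) V2 \<and>
               (\<forall>\<Gamma>\<in>SA_polytope n d m. cost_pair n d E th1 th2 V2 \<le> cost_pair n d E th1 th2 \<Gamma>)}"
  have eta': "\<eta> \<ge> (ln (8 * m * n ^ m * d ^ m) + 2 * m * n ^ m * d ^ m) / Min D"
    using eta unfolding D_def .
  have w0: "G0 {i} (\<lambda>k\<in>{i}. x0 i) = 1" if i: "i \<in> verts n" for i
    using single_idx[OF i m1] by (simp add: x0(2) emb_def single_restrict)
  have v1: "1 \<in> verts n" using m2 mn by (simp add: verts_def)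
  have d1: "1 \<le> d"
  proof (rule ccontr)
    assume "\<not> 1 \<le> d"
    then have d0: "d = 0" by simp
    have fin1: "finite (asg d {1::nat})" by (simp add: fin_asg)
    have "card (asg d {1::nat}) = 0" using d0 by (simp add: card_asg)
    then have "asg d {1::nat} = {}" using fin1 by simp
    then show False using P_sum[OF Gs_mem single_idx[OF v1 m1]] by simp
  qed
  have half: "\<Gamma>s {i} (\<lambda>k\<in>{i}. x0 i) > 1/2" if i: "i \<in> verts n" for i
  proof (cases "D = {}")
    case True
    define f where "f G = - (1 - G {i} (\<lambda>k\<in>{i}. x0 i))" for G :: gam
    have "0 \<le> f \<Gamma>s"
    proof (rule affine_nonneg[OF _ _ Gs_mem])
      fix G a b s show "f (L G a b s) = f G + s * (f a - f b)"
        by (simp add: f_def L_def algebra_simps)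
    next
      fix V assume V: "is_vertex ?P V"
      have "\<forall>\<Gamma>\<in>?P. ?c V \<le> ?c \<Gamma>"
      proof (rule ccontr)
        assume "\<not> ?thesis"
        then have "?c V - ?c G0 \<in> D" unfolding D_def using V G0v G0opt by blast
        then show False using True by simp
      qed
      then have "V = G0" using optv V by blast
      then show "0 \<le> f V" using w0[OF i] by (simp add: f_def)
    qed
    then show ?thesis by (simp add: f_def)
  next
    case False
    have finV: "finite {V. is_vertex ?P V}" by (rule fin_vert)
    have "D \<subseteq> (\<lambda>(V1, V2). ?c V1 - ?c V2) ` ({V. is_vertex ?P V} \<times> {V. is_vertex ?P V})"
      unfolding D_def by auto
    moreover have "finite ((\<lambda>(V1, V2). ?c V1 - ?c V2) ` ({V. is_vertex ?P V} \<times> {V. is_vertex ?P V}))"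
      using finV by simp
    ultimately have finD: "finite D" by (rule finite_subset)
    define \<Delta> where "\<Delta> = Min D"
    have "\<Delta> \<in> D" unfolding \<Delta>_def using finD False by (rule Min_in)
    then obtain V1 V2 where V12: "\<Delta> = ?c V1 - ?c V2" "is_vertex ?P V1"
      "\<not> (\<forall>\<Gamma>\<in>?P. ?c V1 \<le> ?c \<Gamma>)" "is_vertex ?P V2" "\<forall>\<Gamma>\<in>?P. ?c V2 \<le> ?c \<Gamma>"
      unfolding D_def by blast
    have "V2 = G0" using optv V12(4,5) by blast
    obtain G' where G': "G' \<in> ?P" "?c G' < ?c V1" using V12(3) by (auto simp: not_le)
    have Dpos: "\<Delta> > 0" using V12(1) \<open>V2 = G0\<close> G0opt G' by force
    have Dle: "\<Delta> \<le> e" if "e \<in> D" for e unfolding \<Delta>_def using finD that by simp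
    define f where "f G = (1 / \<Delta>) * (?c G - ?c G0) - (1 - G {i} (\<lambda>k\<in>{i}. x0 i))" for G :: gam
    have "0 \<le> f \<Gamma>s"
    proof (rule affine_nonneg[OF _ _ Gs_mem])
      fix G a b s
      have e1: "?c (L G a b s) = ?c G + s * (?c a - ?c b)" by (rule cost_L)
      have e2: "L G a b s {i} (\<lambda>k\<in>{i}. x0 i) = G {i} (\<lambda>k\<in>{i}. x0 i) + s * (a {i} (\<lambda>k\<in>{i}. x0 i) - b {i} (\<lambda>k\<in>{i}. x0 i))"
        by (simp add: L_def)
      show "f (L G a b s) = f G + s * (f a - f b)"
        unfolding f_def e1 e2 using Dpos by (simp add: field_simps)
    next
      fix V assume V: "is_vertex ?P V"
      show "0 \<le> f V"
      proof (cases "\<forall>\<Gamma>\<in>?P. ?c V \<le> ?c \<Gamma>")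
        case True
        then have "V = G0" using optv V by blast
        then show ?thesis using w0[OF i] by (simp add: f_def)
      next
        case nopt: False
        then have "?c V - ?c G0 \<in> D" unfolding D_def using V G0v G0opt by blast
        then have "\<Delta> \<le> ?c V - ?c G0" by (rule Dle)
        then have "1 \<le> (1 / \<Delta>) * (?c V - ?c G0)" using Dpos by (simp add: field_simps)
        moreover have "0 \<le> V {i} (\<lambda>k\<in>{i}. x0 i)"
        proof -
          have "V \<in> ?P" using V by (simp add: is_vertex_def)
          then show ?thesis by (rule P_nonneg)
        qed
        ultimately show ?thesis by (simp add: f_def)
      qed
    qed
    define g where "g = \<Gamma>s {i} (\<lambda>k\<in>{i}. x0 i)"
    define X where "X = ?c \<Gamma>s - ?c G0"
    have fX: "\<Delta> * (1 - g) \<le> X"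
    proof -
      have "1 - g \<le> (1 / \<Delta>) * X" using \<open>0 \<le> f \<Gamma>s\<close> by (simp add: f_def g_def X_def)
      then have "\<Delta> * (1 - g) \<le> \<Delta> * ((1 / \<Delta>) * X)" using Dpos by (intro mult_left_mono) auto
      then show ?thesis using Dpos by simp
    qed
    define R where "R = real m * real n ^ m * real d ^ m"
    have R1: "1 \<le> R"
    proof -
      have "1 \<le> m" "1 \<le> n" "1 \<le> d" using m2 mn d1 by auto
      then have "1 \<le> m * n ^ m * d ^ m" by simp
      then have "1 \<le> real (m * n ^ m * d ^ m)" by linarith
      then show ?thesis by (simp add: R_def)
    qed
    define A where "A = ln (8 * m * n ^ m * d ^ m) + 2 * m * n ^ m * d ^ m"
    have AR: "A = ln (8 * R) + 2 * R" by (simp add: A_def R_def mult.assoc)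
    have "ln (8 * R) > 0" using R1 by simp
    then have A2R: "A > 2 * R" using AR by simp
    have etaA: "A / \<Delta> \<le> \<eta>" using eta' by (simp add: A_def \<Delta>_def)
    then have etaD: "A \<le> \<eta> * \<Delta>" using Dpos by (simp add: pos_divide_le_eq)
    have etapos: "\<eta> > 0"
    proof (rule ccontr)
      assume "\<not> \<eta> > 0"
      then have "\<eta> * \<Delta> \<le> 0" using Dpos by (simp add: mult_nonpos_nonneg)
      then show False using etaD A2R R1 by linarith
    qed
    have opt: "?c \<Gamma>s - (1 / \<eta>) * entropy n d m \<Gamma>s \<le> ?c G0 - (1 / \<eta>) * entropy n d m G0"
      using Gs_min G0(1) by blast
    have H1: "entropy n d m \<Gamma>s \<le> R" unfolding R_def by (rule entropy_le[OF Gs_mem d1 mn])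
    have H0: "0 \<le> entropy n d m G0" by (rule entropy_nonneg[OF G0(1)])
    have "X \<le> (1 / \<eta>) * (entropy n d m \<Gamma>s - entropy n d m G0)"
      using opt by (simp add: X_def algebra_simps)
    also have "\<dots> \<le> (1 / \<eta>) * R" using H1 H0 etapos by (intro mult_left_mono) auto
    finally have "\<eta> * X \<le> \<eta> * ((1 / \<eta>) * R)" using etapos by (intro mult_left_mono) auto
    then have etaX: "\<eta> * X \<le> R" using etapos by simp
    show ?thesis
    proof (rule ccontr)
      assume "\<not> ?thesis"
      then have "1/2 \<le> 1 - g" by (simp add: g_def)
      then have "\<eta> * \<Delta> * (1/2) \<le> \<eta> * \<Delta> * (1 - g)" using etapos Dpos by (intro mult_left_mono) auto
      also have "\<dots> = \<eta> * (\<Delta> * (1 - g))" by simp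
      also have "\<dots> \<le> \<eta> * X" using fX etapos by (intro mult_left_mono) auto
      finally have "\<eta> * \<Delta> \<le> 2 * R" using etaX by simp
      then show False using etaD A2R by linarith
    qed
  qed
  have xx0: "x i = x0 i" if i: "i \<in> verts n" for i
  proof (rule ccontr)
    assume ne: "x i \<noteq> x0 i"
    define w1 where "w1 = (\<lambda>k\<in>{i}. x i)"
    define w0 where "w0 = (\<lambda>k\<in>{i}. x0 i)"
    have "w1 i \<noteq> w0 i" using ne by (simp add: w1_def w0_def)
    then have wne: "w1 \<noteq> w0" by metis
    have w1A: "w1 \<in> asg d {i}" using x_argmax i by (simp add: w1_def asg_def)
    have w0A: "w0 \<in> asg d {i}" using x0(1) i by (simp add: w0_def asg_def)
    have g0: "\<Gamma>s {i} w0 > 1/2" using half[OF i] by (simp add: w0_def)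
    have g1: "\<Gamma>s {i} w1 \<ge> \<Gamma>s {i} w0" using x_argmax i x0(1) by (simp add: w1_def w0_def)
    have "(\<Sum>y\<in>{w0, w1}. \<Gamma>s {i} y) \<le> (\<Sum>y\<in>asg d {i}. \<Gamma>s {i} y)"
      by (rule sum_mono2) (use w0A w1A P_nonneg[OF Gs_mem] fin_asg in auto)
    also have "\<dots> = 1" by (rule P_sum[OF Gs_mem single_idx[OF i m1]])
    finally show False using wne g0 g1 by simp
  qed
  have sc: "score n E th1 th2 x = score n E th1 th2 x0"
  proof -
    have "(\<Sum>i\<in>verts n. th1 i (x i)) = (\<Sum>i\<in>verts n. th1 i (x0 i))"
      using xx0 by simp
    moreover have "(\<Sum>(i,j)\<in>E. th2 i j (x i) (x j)) = (\<Sum>(i,j)\<in>E. th2 i j (x0 i) (x0 j))"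
    proof (rule sum.cong[OF refl])
      fix e assume "e \<in> E"
      then have "fst e \<in> verts n" "snd e \<in> verts n" using edges by auto
      then show "(case e of (i, j) \<Rightarrow> th2 i j (x i) (x j)) = (case e of (i, j) \<Rightarrow> th2 i j (x0 i) (x0 j))"
        using xx0 by (simp add: case_prod_beta)
    qed
    ultimately show ?thesis by (simp add: score_def)
  qed
  show ?thesis unfolding is_MAP_def
  proof (intro conjI allI impI)
    show "\<forall>i\<in>verts n. x i \<in> states d" using x_argmax by blast
    fix x' assume x': "\<forall>i\<in>verts n. x' i \<in> states d"
    have "score n E th1 th2 x' = ?th (emb n m x')" using theta_emb[OF x' edges m2] by simp
    also have "\<dots> \<le> ?th G0" using G0(3) emb_mem[OF x'] by blast
    also have "\<dots> = score n E th1 th2 x0" using theta_emb[OF x0(1) edges m2] x0(2) by simp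
    also have "\<dots> = score n E th1 th2 x" using sc by simp
    finally show "score n E th1 th2 x' \<le> score n E th1 th2 x" .
  qed
qed

end
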